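(* Let $k\geq2$ be an integer and $0<\epsilon\leq1-1/k$. Then there is no real number $B$ with $$B<\frac1k+\epsilon\frac{k-2}{k}+2\frac{\sqrt{k-1}}{k}\sqrt{\epsilon-\epsilon^2}$$ such that the following holds: for every $n$, every $h\in\mathbb{R}[x_1,\ldots,x_n]$ hyperbolic with respect to some $\mathbf{e}$, every $m$, and every $\mathbf{u}_1,\ldots,\mathbf{u}_m\in\Lambda_+(\mathbf{e})$ with $\operatorname{rk}(\mathbf{u}_i)\leq1$ and $\operatorname{tr}(\mathbf{u}_i)\leq\epsilon$ for all $i$ and $\mathbf{u}_1+\cdots+\mathbf{u}_m=\mathbf{e}$, there is a partition $S_1\cup\cdots\cup S_k=[m]$ with $\big\|\sum_{i\in S_j}\mathbf{u}_i\big\|\leq B$ for each $j\in[k]$. (That is, no bound independent of $m$ and of the degree $d$ of $h$ in this partition statement can be smaller than the displayed quantity.)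
   Context: A homogeneous polynomial $h$ of degree $d$ is hyperbolic with respect to $\mathbf{e}\in\mathbb{R}^n$ if $h(\mathbf{e})\neq0$ and for every $\mathbf{x}$, $t\mapsto h(t\mathbf{e}-\mathbf{x})$ has only real zeros; writing $h(t\mathbf{e}-\mathbf{x})=h(\mathbf{e})\prod_{j=1}^d(t-\lambda_j(\mathbf{x}))$ defines the eigenvalues. $\Lambda_+(\mathbf{e})=\{\mathbf{x}:\min_j\lambda_j(\mathbf{x})\geq0\}$, $\operatorname{tr}(\mathbf{x})=\sum_j\lambda_j(\mathbf{x})$, $\operatorname{rk}(\mathbf{x})=\#\{j:\lambda_j(\mathbf{x})\neq0\}$, $\|\mathbf{x}\|=\max_j|\lambda_j(\mathbf{x})|$. *)

theory Defs
  imports "HOL-Analysis.Analysis" "HOL-Library.Multiset"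
begin

text \<open>Vectors of R^n are represented as functions nat => real vanishing at indices >= n.
  A real polynomial in x_0..x_(n-1) is given by its coefficient function on exponent
  vectors (nat => nat) with finite support.\<close>

definition vecs :: "nat \<Rightarrow> (nat \<Rightarrow> real) set" where
  "vecs n = {x. \<forall>i\<ge>n. x i = 0}"

definition peval :: "nat \<Rightarrow> ((nat \<Rightarrow> nat) \<Rightarrow> real) \<Rightarrow> (nat \<Rightarrow> 'a::{real_algebra_1,comm_ring_1}) \<Rightarrow> 'a" where
  "peval n c x = (\<Sum>\<alpha>\<in>{\<alpha>. c \<alpha> \<noteq> 0}. of_real (c \<alpha>) * (\<Prod>i<n. x i ^ \<alpha> i))"

definition hom_poly :: "nat \<Rightarrow> nat \<Rightarrow> ((nat \<Rightarrow> nat) \<Rightarrow> real) \<Rightarrow> bool" where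
  "hom_poly n d c \<longleftrightarrow> finite {\<alpha>. c \<alpha> \<noteq> 0} \<and>
     (\<forall>\<alpha>. c \<alpha> \<noteq> 0 \<longrightarrow> (\<forall>i\<ge>n. \<alpha> i = 0) \<and> (\<Sum>i<n. \<alpha> i) = d)"

definition hyperbolic :: "nat \<Rightarrow> nat \<Rightarrow> ((nat \<Rightarrow> nat) \<Rightarrow> real) \<Rightarrow> (nat \<Rightarrow> real) \<Rightarrow> bool" where
  "hyperbolic n d c e \<longleftrightarrow> hom_poly n d c \<and> e \<in> vecs n \<and> peval n c e \<noteq> (0::real) \<and>
     (\<forall>x\<in>vecs n. \<forall>t::complex.
        peval n c (\<lambda>i. t * complex_of_real (e i) - complex_of_real (x i)) = 0 \<longrightarrow> t \<in> \<real>)"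

definition eigs :: "nat \<Rightarrow> nat \<Rightarrow> ((nat \<Rightarrow> nat) \<Rightarrow> real) \<Rightarrow> (nat \<Rightarrow> real) \<Rightarrow> (nat \<Rightarrow> real) \<Rightarrow> real multiset" where
  "eigs n d c e x = (THE L. size L = d \<and>
     (\<forall>t::real. peval n c (\<lambda>i. t * e i - x i) = peval n c e * (\<Prod>l\<in>#L. (t - l))))"

definition in_Lambda_plus :: "nat \<Rightarrow> nat \<Rightarrow> ((nat \<Rightarrow> nat) \<Rightarrow> real) \<Rightarrow> (nat \<Rightarrow> real) \<Rightarrow> (nat \<Rightarrow> real) \<Rightarrow> bool" where
  "in_Lambda_plus n d c e x \<longleftrightarrow> (\<forall>l\<in>#eigs n d c e x. 0 \<le> l)"

definition htr :: "nat \<Rightarrow> nat \<Rightarrow> ((nat \<Rightarrow> nat) \<Rightarrow> real) \<Rightarrow> (nat \<Rightarrow> real) \<Rightarrow> (nat \<Rightarrow> real) \<Rightarrow> real" where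
  "htr n d c e x = sum_mset (eigs n d c e x)"

definition hrk :: "nat \<Rightarrow> nat \<Rightarrow> ((nat \<Rightarrow> nat) \<Rightarrow> real) \<Rightarrow> (nat \<Rightarrow> real) \<Rightarrow> (nat \<Rightarrow> real) \<Rightarrow> nat" where
  "hrk n d c e x = size (filter_mset (\<lambda>l. l \<noteq> 0) (eigs n d c e x))"

text \<open>Spectral norm; by convention 0 when there are no eigenvalues (d = 0).\<close>
definition hnorm :: "nat \<Rightarrow> nat \<Rightarrow> ((nat \<Rightarrow> nat) \<Rightarrow> real) \<Rightarrow> (nat \<Rightarrow> real) \<Rightarrow> (nat \<Rightarrow> real) \<Rightarrow> real" where
  "hnorm n d c e x = (if eigs n d c e x = {#} then 0
      else Max (abs ` set_mset (eigs n d c e x)))"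

end

theory Submission
  imports Defs "HOL-Computational_Algebra.Fundamental_Theorem_Algebra"
begin

fun es :: "(nat \<Rightarrow> 'a::comm_ring_1) \<Rightarrow> nat \<Rightarrow> nat \<Rightarrow> 'a" where
  "es w 0 j = (if j = 0 then 1 else 0)"
| "es w (Suc m) 0 = 1"
| "es w (Suc m) (Suc j) = es w m (Suc j) + w m * es w m j"

lemma es_0 [simp]: "es w m 0 = 1"
  by (cases m) auto

lemma es_gt: "m < j \<Longrightarrow> es w m j = 0"
proof (induction m arbitrary: j)
  case 0 then show ?case by simp
next
  case (Suc m) then show ?case by (cases j) auto
qed

lemma es_cong: "(\<And>i. i < m \<Longrightarrow> w i = v i) \<Longrightarrow> es w m j = es v m j"
proof (induction m arbitrary: j)
  case 0 then show ?case by simp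
next
  case (Suc m) then show ?case by (cases j) auto
qed

lemma es_poly: "poly (es W m j) t = es (\<lambda>i. poly (W i) t) m j"
proof (induction m arbitrary: j)
  case 0 then show ?case by simp
next
  case (Suc m) then show ?case by (cases j) auto
qed

lemma es_of_real: "es (\<lambda>i. of_real (v i) :: 'a::{real_algebra_1,comm_ring_1}) m j = of_real (es v m j)"
proof (induction m arbitrary: j)
  case 0 then show ?case by simp
next
  case (Suc m) then show ?case by (cases j) auto
qed

lemma es_const: "es (\<lambda>_. c) m j = of_nat (m choose j) * c ^ j"
proof (induction m arbitrary: j)
  case 0 then show ?case by (cases j) auto
next
  case (Suc m) then show ?case by (cases j) (auto simp: algebra_simps)
qed

lemma coeff_prod_0: "coeff (\<Prod>i\<in>A. [:1, v i:]) 0 = 1"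
  by (simp add: poly_0_coeff_0[symmetric] poly_prod del: poly_0_coeff_0)

lemma es_gen: "es v m j = coeff (\<Prod>i<m. [:1, v i:]) j"
proof (induction m arbitrary: j)
  case 0 then show ?case by simp
next
  case (Suc m) then show ?case
    by (cases j) (auto simp: algebra_simps coeff_prod_0)
qed

lemma es_set: "es w m j = (\<Sum>T\<in>{T. T \<subseteq> {..<m} \<and> card T = j}. \<Prod>i\<in>T. w i)"
proof (induction m arbitrary: j)
  case 0
  have "{T. T \<subseteq> {..<0::nat} \<and> card T = j} = (if j = 0 then {{}} else {})" by auto
  then show ?case by simp
next
  case (Suc m)
  show ?case
  proof (cases j)
    case 0
    have "{T. T \<subseteq> {..<Suc m} \<and> card T = 0} = {{}}"
      by (auto dest: finite_subset[of _ "{..<Suc m}"])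
    then show ?thesis using 0 by simp
  next
    case (Suc j')
    let ?A = "{T. T \<subseteq> {..<m} \<and> card T = Suc j'}"
    let ?B = "{T. T \<subseteq> {..<m} \<and> card T = j'}"
    have split: "{T. T \<subseteq> {..<Suc m} \<and> card T = Suc j'} = ?A \<union> insert m ` ?B"
    proof (intro set_eqI iffI)
      fix T assume T: "T \<in> {T. T \<subseteq> {..<Suc m} \<and> card T = Suc j'}"
      show "T \<in> ?A \<union> insert m ` ?B"
      proof (cases "m \<in> T")
        case True
        have fT: "finite T" using T finite_subset by blast
        have "T - {m} \<in> ?B" using T True fT by auto
        moreover have "T = insert m (T - {m})" using True by auto
        ultimately show ?thesis by blast
      next
        case False then show ?thesis using T by (auto simp: less_Suc_eq)
      qed
    next
      fix T assume "T \<in> ?A \<union> insert m ` ?B"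
      then show "T \<in> {T. T \<subseteq> {..<Suc m} \<and> card T = Suc j'}"
      proof
        assume "T \<in> ?A" then show ?thesis by auto
      next
        assume "T \<in> insert m ` ?B"
        then obtain U where U: "U \<in> ?B" "T = insert m U" by blast
        have "finite U" using U finite_subset[of U "{..<m}"] by auto
        moreover have "m \<notin> U" using U by auto
        ultimately show ?thesis using U by auto
      qed
    qed
    have disj: "?A \<inter> insert m ` ?B = {}" by auto
    have fA: "finite ?A" by (rule finite_subset[of _ "Pow {..<m}"]) auto
    have fB: "finite ?B" by (rule finite_subset[of _ "Pow {..<m}"]) auto
    have inj: "inj_on (insert m) ?B" unfolding inj_on_def
      by (metis (no_types, lifting) Diff_insert_absorb lessThan_iff less_irrefl mem_Collect_eq subsetD)
    have "(\<Sum>T\<in>insert m ` ?B. \<Prod>i\<in>T. w i) = (\<Sum>T\<in>?B. \<Prod>i\<in>insert m T. w i)"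
      by (rule sum.reindex[OF inj, unfolded comp_def])
    also have "\<dots> = (\<Sum>T\<in>?B. w m * (\<Prod>i\<in>T. w i))"
    proof (rule sum.cong)
      fix T assume "T \<in> ?B"
      then have "finite T" "m \<notin> T" using finite_subset[of T "{..<m}"] by auto
      then show "(\<Prod>i\<in>insert m T. w i) = w m * (\<Prod>i\<in>T. w i)" by simp
    qed simp
    also have "\<dots> = w m * es w m j'" by (simp add: Suc.IH sum_distrib_left)
    finally have 2: "(\<Sum>T\<in>insert m ` ?B. \<Prod>i\<in>T. w i) = w m * es w m j'" .
    show ?thesis unfolding Suc split
      by (subst sum.union_disjoint) (use fA fB disj 2 Suc.IH in auto)
  qed
qed

lemma coeff_lin_mult: "coeff ([:c, 1:] * (p::'a::comm_ring_1 poly)) j = c * coeff p j + (if j = 0 then 0 else coeff p (j - 1))"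
  by (cases j) auto

lemma pderiv_lin [simp]: "pderiv [:c, 1:] = 1"
  by (simp add: pderiv_pCons)

lemma pderiv_es: "pderiv (es (\<lambda>i. [:a i, 1:]) m (Suc j)) = of_nat (m - j) * es (\<lambda>i. [:a i, 1:]) m j"
proof (induction m arbitrary: j)
  case 0 then show ?case by simp
next
  case (Suc m)
  show ?case
  proof (cases j)
    case 0
    then show ?thesis using Suc.IH[of 0] by (simp add: pderiv_mult pderiv_add algebra_simps)
  next
    case (Suc j')
    have h1: "pderiv (es (\<lambda>i. [:a i, 1:]) m (Suc j)) = of_nat (m - j) * es (\<lambda>i. [:a i, 1:]) m j" by (rule Suc.IH)
    have h2: "pderiv (es (\<lambda>i. [:a i, 1:]) m j) = of_nat (m - j') * es (\<lambda>i. [:a i, 1:]) m j'"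
      using Suc.IH[of j'] Suc by simp
    show ?thesis
    proof (cases "j \<le> m")
      case True
      then have e: "m - j' = Suc (m - j)" using Suc by simp
      have e2: "Suc m - j = Suc (m - j)" using True by simp
      have "pderiv (es (\<lambda>i. [:a i, 1:]) (Suc m) (Suc j)) =
          pderiv (es (\<lambda>i. [:a i, 1:]) m (Suc j)) + ([:a m, 1:] * pderiv (es (\<lambda>i. [:a i, 1:]) m j) + es (\<lambda>i. [:a i, 1:]) m j)"
        by (simp add: pderiv_add pderiv_mult del: mult_pCons_left)
      also have "\<dots> = of_nat (Suc m - j) * (es (\<lambda>i. [:a i, 1:]) m j + [:a m, 1:] * es (\<lambda>i. [:a i, 1:]) m j')"
        unfolding h1 h2 e e2 by (simp add: algebra_simps del: mult_pCons_left)
      also have "\<dots> = of_nat (Suc m - j) * es (\<lambda>i. [:a i, 1:]) (Suc m) j"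
        using Suc by (simp del: mult_pCons_left)
      finally show ?thesis .
    next
      case False
      then have z: "es (\<lambda>i. [:a i, 1:]) m j = 0" by (simp add: es_gt)
      have z2: "m - j' = 0" using False Suc by simp
      show ?thesis using False by (simp add: pderiv_mult pderiv_add h1 h2 z z2 del: mult_pCons_left)
    qed
  qed
qed

lemma degree_es: "degree (es (\<lambda>i. [:a i, 1:]) m j) \<le> j"
proof (induction m arbitrary: j)
  case 0 then show ?case by simp
next
  case (Suc m)
  show ?case
  proof (cases j)
    case 0 then show ?thesis by simp
  next
    case (Suc j')
    have "degree ([:a m, 1:] * es (\<lambda>i. [:a i, 1:]) m j') \<le> Suc j'"
      using degree_mult_le[of "[:a m, 1:]" "es (\<lambda>i. [:a i, 1:]) m j'"] Suc.IH[of j'] by simp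
    then show ?thesis using Suc Suc.IH[of j] by (simp add: degree_add_le)
  qed
qed

lemma coeff_es_gt: "d < j \<Longrightarrow> coeff (es (\<lambda>i. [:a i, 1:]) m d) j = 0"
  using degree_es[of a m d] by (simp add: coeff_eq_0)

lemma coeff_es: "j \<le> d \<Longrightarrow> d \<le> m \<Longrightarrow>
  coeff (es (\<lambda>i. [:a i, 1:]) m d) j = of_nat ((m - d + j) choose j) * es a m (d - j)"
proof (induction m arbitrary: d j)
  case 0 then show ?case by simp
next
  case (Suc m)
  show ?case
  proof (cases d)
    case 0 then show ?thesis using Suc.prems by simp
  next
    case (Suc d')
    have rec: "coeff (es (\<lambda>i. [:a i, 1:]) (Suc m) d) j =
      coeff (es (\<lambda>i. [:a i, 1:]) m (Suc d')) j + a m * coeff (es (\<lambda>i. [:a i, 1:]) m d') j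
      + (if j = 0 then 0 else coeff (es (\<lambda>i. [:a i, 1:]) m d') (j - 1))"
      using Suc by (simp add: coeff_lin_mult del: mult_pCons_left)
    show ?thesis
    proof (cases "d' < m")
      case dm: True
      show ?thesis
      proof (cases "j \<le> d'")
        case True
        have c1: "coeff (es (\<lambda>i. [:a i, 1:]) m (Suc d')) j = of_nat ((m - Suc d' + j) choose j) * es a m (Suc d' - j)"
          using Suc.IH[of j "Suc d'"] True dm by simp
        have c2: "coeff (es (\<lambda>i. [:a i, 1:]) m d') j = of_nat ((m - d' + j) choose j) * es a m (d' - j)"
          using Suc.IH[of j d'] True dm by simp
        have c3: "j > 0 \<Longrightarrow> coeff (es (\<lambda>i. [:a i, 1:]) m d') (j - 1) = of_nat ((m - d' + (j - 1)) choose (j - 1)) * es a m (d' - (j - 1))"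
          using Suc.IH[of "j - 1" d'] True dm by simp
        have e1: "Suc d' - j = Suc (d' - j)" using True by simp
        have e2: "j > 0 \<Longrightarrow> d' - (j - 1) = Suc (d' - j)" using True by simp
        have b: "j > 0 \<Longrightarrow> ((m - Suc d' + j) choose j) + ((m - d' + (j - 1)) choose (j - 1)) = ((m - d' + j) choose j)"
        proof -
          assume "j > 0"
          then obtain j0 where j0: "j = Suc j0" by (cases j) auto
          have "m - d' + j = Suc (m - Suc d' + j)" using dm by simp
          moreover have "m - d' + (j - 1) = m - Suc d' + j" using dm j0 by simp
          ultimately show ?thesis using j0 by (simp add: add.commute)
        qed
        show ?thesis
        proof (cases "j = 0")
          case True
          then show ?thesis using rec c1 c2 Suc by (simp add: algebra_simps)
        next
          case False
          have "coeff (es (\<lambda>i. [:a i, 1:]) (Suc m) d) j =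
             of_nat ((m - Suc d' + j) choose j) * es a m (Suc (d' - j)) + a m * (of_nat ((m - d' + j) choose j) * es a m (d' - j))
             + of_nat ((m - d' + (j - 1)) choose (j - 1)) * es a m (Suc (d' - j))"
            using rec c1 c2 c3 e1 e2 False by simp
          also have "\<dots> = (of_nat ((m - Suc d' + j) choose j) + of_nat ((m - d' + (j - 1)) choose (j - 1))) * es a m (Suc (d' - j)) + a m * (of_nat ((m - d' + j) choose j) * es a m (d' - j))"
            by (simp only: algebra_simps)
          also have "\<dots> = of_nat ((m - d' + j) choose j) * es a m (Suc (d' - j)) + a m * (of_nat ((m - d' + j) choose j) * es a m (d' - j))"
            using b False by (simp only: of_nat_add[symmetric])
          also have "\<dots> = of_nat ((m - d' + j) choose j) * (es a m (Suc (d' - j)) + a m * es a m (d' - j))"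
            by (simp only: algebra_simps)
          also have "\<dots> = of_nat ((Suc m - d + j) choose j) * es a (Suc m) (d - j)"
            using Suc e1 by simp
          finally show ?thesis .
        qed
      next
        case False
        then have j: "j = Suc d'" using Suc Suc.prems by simp
        have c1: "coeff (es (\<lambda>i. [:a i, 1:]) m (Suc d')) j = of_nat (m choose Suc d')"
          using Suc.IH[of j "Suc d'"] j dm by simp
        have c2: "coeff (es (\<lambda>i. [:a i, 1:]) m d') j = 0" using j coeff_es_gt[of d' "Suc d'"] by simp
        have c3: "coeff (es (\<lambda>i. [:a i, 1:]) m d') d' = of_nat (m choose d')"
          using Suc.IH[of d' d'] dm by simp
        have "m - d' + d' = m" using dm by simp
        then show ?thesis using rec c1 c2 c3 j Suc by simp
      qed
    next
      case False
      then have dm: "d' = m" using Suc Suc.prems by simp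
      have z: "es (\<lambda>i. [:a i, 1:]) m (Suc d') = 0" using dm by (simp add: es_gt)
      show ?thesis
      proof (cases "j \<le> d'")
        case True
        have c2: "coeff (es (\<lambda>i. [:a i, 1:]) m d') j = es a m (d' - j)"
          using Suc.IH[of j d'] True dm by simp
        have c3: "j > 0 \<Longrightarrow> coeff (es (\<lambda>i. [:a i, 1:]) m d') (j - 1) = es a m (d' - (j - 1))"
          using Suc.IH[of "j - 1" d'] True dm by simp
        have e2: "j > 0 \<Longrightarrow> d' - (j - 1) = Suc (d' - j)" using True by simp
        have z2: "es a m (Suc d') = 0" using dm by (simp add: es_gt)
        show ?thesis
        proof (cases "j = 0")
          case True then show ?thesis using rec z c2 Suc dm z2 by simp
        next
          case False
          then show ?thesis using rec z c2 c3 e2 Suc dm True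
            by (simp add: algebra_simps Suc_diff_le)
        qed
      next
        case False
        then have j: "j = Suc d'" using Suc Suc.prems by simp
        have c2: "coeff (es (\<lambda>i. [:a i, 1:]) m d') j = 0" using j coeff_es_gt[of d' "Suc d'"] by simp
        have c3: "coeff (es (\<lambda>i. [:a i, 1:]) m d') d' = 1"
          using Suc.IH[of d' d'] dm by simp
        show ?thesis using rec z c2 c3 j Suc dm by simp
      qed
    qed
  qed
qed

lemma im_key:
  fixes a D Q :: complex
  shows "Im ((a * D + Q) * cnj (a * Q)) = (cmod a)^2 * Im (D * cnj Q) - (cmod Q)^2 * Im a"
proof -
  have "(a * D + Q) * cnj (a * Q) = (a * cnj a) * (D * cnj Q) + (Q * cnj Q) * cnj a"
    by (simp add: algebra_simps)
  also have "\<dots> = of_real ((cmod a)^2) * (D * cnj Q) + of_real ((cmod Q)^2) * cnj a"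
    by (simp only: complex_norm_square)
  finally show ?thesis by simp
qed

lemma im_prod:
  fixes R :: "complex multiset" and t :: complex
  assumes "\<forall>z\<in>#R. z \<in> \<real>" and "t \<notin> \<real>"
  shows "Im (poly (pderiv (\<Prod>z\<in>#R. [:-z, 1:])) t * cnj (poly (\<Prod>z\<in>#R. [:-z, 1:]) t)) * Im t \<le> 0 \<and>
         (R \<noteq> {#} \<longrightarrow> Im (poly (pderiv (\<Prod>z\<in>#R. [:-z, 1:])) t * cnj (poly (\<Prod>z\<in>#R. [:-z, 1:]) t)) * Im t < 0)"
  using assms(1)
proof (induction R)
  case empty then show ?case by simp
next
  case (add z R)
  let ?q = "\<Prod>z\<in>#R. [:-z, 1:]"
  define Q where "Q = poly ?q t"
  define D where "D = poly (pderiv ?q) t"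
  define a where "a = t - z"
  have zr: "z \<in> \<real>" using add.prems by simp
  have IH: "Im (D * cnj Q) * Im t \<le> 0" using add unfolding D_def Q_def by simp
  have Ima: "Im a = Im t" using zr unfolding a_def by (auto elim: Reals_cases)
  have Qnz: "Q \<noteq> 0"
  proof
    assume "Q = 0"
    then obtain w where "w \<in># R" "t = w" unfolding Q_def by (auto simp: poly_prod_mset prod_mset_zero_iff)
    then show False using add.prems assms(2) by auto
  qed
  have Imt: "Im t \<noteq> 0" using assms(2) complex_is_Real_iff by blast
  have p: "poly (\<Prod>z\<in>#add_mset z R. [:-z, 1:]) t = a * Q" unfolding a_def Q_def by (simp add: algebra_simps)
  have dp: "poly (pderiv (\<Prod>z\<in>#add_mset z R. [:-z, 1:])) t = a * D + Q"
    unfolding a_def Q_def D_def by (simp add: pderiv_mult algebra_simps del: mult_pCons_left)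
  have "Im ((a * D + Q) * cnj (a * Q)) * Im t = (cmod a)^2 * (Im (D * cnj Q) * Im t) - (cmod Q)^2 * (Im t)^2"
    unfolding im_key Ima by (simp only: algebra_simps power2_eq_square)
  moreover have "(cmod a)^2 * (Im (D * cnj Q) * Im t) \<le> 0"
    using IH by (simp add: mult_nonneg_nonpos)
  moreover have "(cmod Q)^2 * (Im t)^2 > 0" using Qnz Imt by simp
  ultimately have "Im ((a * D + Q) * cnj (a * Q)) * Im t < 0" by linarith
  then show ?case unfolding p dp by simp
qed

lemma deriv_real_roots:
  fixes p :: "complex poly"
  assumes "p \<noteq> 0" "\<forall>z. poly p z = 0 \<longrightarrow> z \<in> \<real>" "degree p \<ge> 1"
  shows "\<forall>z. poly (pderiv p) z = 0 \<longrightarrow> z \<in> \<real>"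
proof (intro allI impI)
  fix t assume t0: "poly (pderiv p) t = 0"
  show "t \<in> \<real>"
  proof (rule ccontr)
    assume tn: "t \<notin> \<real>"
    let ?R = "proots p"
    have Rr: "\<forall>z\<in>#?R. z \<in> \<real>" using assms(1,2) by simp
    have Rne: "?R \<noteq> {#}" using size_proots_complex[of p] assms(3) by auto
    have dec: "p = smult (lead_coeff p) (\<Prod>z\<in>#?R. [:-z, 1:])"
      by (simp add: complex_poly_decompose_multiset)
    have lc: "lead_coeff p \<noteq> 0" using assms(1) by simp
    have "poly (pderiv p) t = lead_coeff p * poly (pderiv (\<Prod>z\<in>#?R. [:-z, 1:])) t"
      by (subst dec) (simp add: pderiv_smult)
    then have "poly (pderiv (\<Prod>z\<in>#?R. [:-z, 1:])) t = 0" using t0 lc by simp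
    then show False using im_prod[OF Rr tn] Rne by simp
  qed
qed

lemma es_top: "es w m m = (\<Prod>i<m. w i)"
  by (induction m) (auto simp: es_gt)

lemma es_lead:
  assumes "d \<le> m"
  shows "coeff (es (\<lambda>i. [:a i, 1:]) m d) d = of_nat (m choose d)"
  using coeff_es[of d d m a] assms by simp

lemma es_degree:
  assumes "d \<le> m"
  shows "degree (es (\<lambda>i. [:a i, 1:] :: 'a::{comm_ring_1,ring_char_0} poly) m d) = d"
proof -
  have "coeff (es (\<lambda>i. [:a i, 1:] :: 'a poly) m d) d \<noteq> 0" using es_lead[OF assms, of a] assms by simp
  then have "degree (es (\<lambda>i. [:a i, 1:] :: 'a poly) m d) \<ge> d" by (simp add: le_degree)
  then show ?thesis using degree_es[of a m d] by simp
qed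

lemma es_real_rooted:
  fixes x :: "nat \<Rightarrow> complex"
  assumes xr: "\<forall>i<m. x i \<in> \<real>" and dm: "d \<le> m"
  shows "es (\<lambda>i. [:-x i, 1:]) m d \<noteq> 0 \<and> (\<forall>z. poly (es (\<lambda>i. [:-x i, 1:]) m d) z = 0 \<longrightarrow> z \<in> \<real>)"
proof -
  have nz: "\<And>j. j \<le> m \<Longrightarrow> es (\<lambda>i. [:-x i, 1:]) m j \<noteq> 0"
  proof -
    fix j assume "j \<le> m"
    then have "coeff (es (\<lambda>i. [:-x i, 1:]) m j) j \<noteq> 0" using es_lead[of j m "\<lambda>i. - x i"] by simp
    then show "es (\<lambda>i. [:-x i, 1:]) m j \<noteq> 0" by auto
  qed
  have "\<forall>z. poly (es (\<lambda>i. [:-x i, 1:]) m (m - r)) z = 0 \<longrightarrow> z \<in> \<real>" if "r \<le> m" for r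
    using that
  proof (induction r)
    case 0
    show ?case
    proof (intro allI impI)
      fix z assume "poly (es (\<lambda>i. [:-x i, 1:]) m (m - 0)) z = 0"
      then have "(\<Prod>i<m. z - x i) = 0" by (simp add: es_top poly_prod)
      then obtain i where "i < m" "z = x i" by auto
      then show "z \<in> \<real>" using xr by auto
    qed
  next
    case (Suc r)
    let ?P = "es (\<lambda>i. [:-x i, 1:]) m (m - r)"
    have IH: "\<forall>z. poly ?P z = 0 \<longrightarrow> z \<in> \<real>" using Suc by simp
    have deg: "degree ?P = m - r" using es_degree[of "m - r" m "\<lambda>i. - x i"] by simp
    have "degree ?P \<ge> 1" using deg Suc.prems by simp
    then have D: "\<forall>z. poly (pderiv ?P) z = 0 \<longrightarrow> z \<in> \<real>"
      using deriv_real_roots[OF nz IH] by simp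
    have e: "m - r = Suc (m - Suc r)" using Suc.prems by simp
    have pd: "pderiv ?P = of_nat (m - (m - Suc r)) * es (\<lambda>i. [:-x i, 1:]) m (m - Suc r)"
      unfolding e using pderiv_es[of "\<lambda>i. - x i" m "m - Suc r"] by simp
    have k: "m - (m - Suc r) \<noteq> 0" using Suc.prems by simp
    show ?case
    proof (intro allI impI)
      fix z assume "poly (es (\<lambda>i. [:-x i, 1:]) m (m - Suc r)) z = 0"
      then have "poly (pderiv ?P) z = 0" unfolding pd by simp
      then show "z \<in> \<real>" using D by blast
    qed
  qed
  from this[of "m - d"] dm nz[OF dm] show ?thesis by simp
qed

definition ind :: "nat set \<Rightarrow> nat \<Rightarrow> nat" where
  "ind T = (\<lambda>i. if i \<in> T then 1 else 0)"

definition Sets :: "nat \<Rightarrow> nat \<Rightarrow> nat set set" where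
  "Sets m d = {T. T \<subseteq> {..<m} \<and> card T = d}"

definition ced :: "nat \<Rightarrow> nat \<Rightarrow> (nat \<Rightarrow> nat) \<Rightarrow> real" where
  "ced m d \<alpha> = (if \<alpha> \<in> ind ` Sets m d then 1 else 0)"

definition ev :: "nat \<Rightarrow> nat \<Rightarrow> real" where
  "ev m = (\<lambda>i. if i < m then 1 else 0)"

lemma ind_inj: "inj_on ind A"
  proof (rule inj_onI)
  fix T U assume "ind T = ind U"
  then have "\<And>i. (i \<in> T) = (i \<in> U)" unfolding ind_def by (metis one_neq_zero)
  then show "T = U" by blast
qed

lemma finite_Sets: "finite (Sets m d)"
  unfolding Sets_def by (rule finite_subset[of _ "Pow {..<m}"]) auto

lemma supp_ced: "{\<alpha>. ced m d \<alpha> \<noteq> 0} = ind ` Sets m d"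
  unfolding ced_def by auto

lemma sum_ind: "T \<subseteq> {..<m} \<Longrightarrow> (\<Sum>i<m. ind T i) = card T"
  unfolding ind_def by (simp add: sum.If_cases Int_absorb1)

lemma hom_poly_ced: "hom_poly m d (ced m d)"
proof -
  have "\<forall>\<alpha>. ced m d \<alpha> \<noteq> 0 \<longrightarrow> (\<forall>i\<ge>m. \<alpha> i = 0) \<and> (\<Sum>i<m. \<alpha> i) = d"
  proof (intro allI impI)
    fix \<alpha> :: "nat \<Rightarrow> nat" assume "ced m d \<alpha> \<noteq> 0"
    then obtain T where T: "T \<in> Sets m d" "\<alpha> = ind T" unfolding ced_def by (auto split: if_splits)
    have "\<forall>i\<ge>m. \<alpha> i = 0" using T unfolding Sets_def ind_def by auto
    moreover have "(\<Sum>i<m. \<alpha> i) = d" using T sum_ind unfolding Sets_def by auto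
    ultimately show "(\<forall>i\<ge>m. \<alpha> i = 0) \<and> (\<Sum>i<m. \<alpha> i) = d" by simp
  qed
  then show ?thesis unfolding hom_poly_def supp_ced using finite_Sets by simp
qed

lemma peval_ced: "peval m (ced m d) x = es x m d"
proof -
  have "peval m (ced m d) x = (\<Sum>\<alpha>\<in>ind ` Sets m d. of_real (ced m d \<alpha>) * (\<Prod>i<m. x i ^ \<alpha> i))"
    unfolding peval_def supp_ced ..
  also have "\<dots> = (\<Sum>T\<in>Sets m d. of_real (ced m d (ind T)) * (\<Prod>i<m. x i ^ ind T i))"
    by (rule sum.reindex[OF ind_inj, unfolded comp_def])
  also have "\<dots> = (\<Sum>T\<in>Sets m d. \<Prod>i\<in>T. x i)"
  proof (rule sum.cong)
    fix T assume T: "T \<in> Sets m d"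
    have "(\<Prod>i<m. x i ^ ind T i) = (\<Prod>i<m. if i \<in> T then x i else 1)"
      unfolding ind_def by (rule prod.cong) auto
    also have "\<dots> = (\<Prod>i\<in>T. x i)"
      using T unfolding Sets_def by (simp add: prod.If_cases Int_absorb1)
    finally show "of_real (ced m d (ind T)) * (\<Prod>i<m. x i ^ ind T i) = (\<Prod>i\<in>T. x i)"
      using T unfolding ced_def by simp
  qed simp
  also have "\<dots> = es x m d" unfolding Sets_def by (simp add: es_set)
  finally show ?thesis .
qed

lemma peval_shift: "peval m (ced m d) (\<lambda>i. t * of_real (ev m i) - y i) = es (\<lambda>i. t - y i) m d"
  unfolding peval_ced by (rule es_cong) (simp add: ev_def)

lemma peval_shift_real: "peval m (ced m d) (\<lambda>i. t * ev m i - y i) = es (\<lambda>i. t - y i) m d"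
  unfolding peval_ced by (rule es_cong) (simp add: ev_def)

lemma peval_e: "peval m (ced m d) (ev m) = real (m choose d)"
proof -
  have "peval m (ced m d) (ev m) = es (\<lambda>_. 1::real) m d"
    unfolding peval_ced by (rule es_cong) (simp add: ev_def)
  then show ?thesis by (simp add: es_const)
qed

lemma ev_vecs: "ev m \<in> vecs m" unfolding vecs_def ev_def by auto

lemma hyperbolic_ced:
  assumes "d \<le> m"
  shows "hyperbolic m d (ced m d) (ev m)"
  unfolding hyperbolic_def
proof (intro conjI ballI allI impI)
  show "hom_poly m d (ced m d)" by (rule hom_poly_ced)
  show "ev m \<in> vecs m" by (rule ev_vecs)
  show "peval m (ced m d) (ev m) \<noteq> (0::real)" using assms by (simp add: peval_e)
next
  fix x :: "nat \<Rightarrow> real" and t :: complex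
  assume "x \<in> vecs m" and z: "peval m (ced m d) (\<lambda>i. t * complex_of_real (ev m i) - complex_of_real (x i)) = 0"
  have "poly (es (\<lambda>i. [:-complex_of_real (x i), 1:]) m d) t = 0"
    using z unfolding peval_shift by (simp add: es_poly)
  then show "t \<in> \<real>" using es_real_rooted[of m "\<lambda>i. complex_of_real (x i)" d] assms by auto
qed

lemma proots_lin_prod: "proots (\<Prod>l\<in>#L. [:-l, 1:]) = (L :: 'a::idom multiset)"
proof (induction L)
  case empty then show ?case by simp
next
  case (add x L)
  have nz: "\<And>l. [:-l, 1:] \<noteq> (0::'a poly)" by simp
  have "(\<Prod>l\<in>#L. [:-l, 1:]) \<noteq> 0" unfolding prod_mset_zero_iff using nz by (metis (no_types, lifting) image_iff set_image_mset)
  then show ?case using add by (simp add: proots_mult del: mult_pCons_left)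
qed

lemma lin_prod_unique:
  fixes L L' :: "real multiset"
  assumes "\<forall>t. (\<Prod>l\<in>#L. (t - l)) = (\<Prod>l\<in>#L'. (t - l))"
  shows "L = L'"
proof -
  have "poly (\<Prod>l\<in>#L. [:-l, 1:]) = poly (\<Prod>l\<in>#L'. [:-l, 1:])"
    using assms by (simp add: poly_prod_mset fun_eq_iff)
  then have "(\<Prod>l\<in>#L. [:-l, 1:]) = (\<Prod>l\<in>#L'. [:-l, 1:])" by (simp add: poly_eq_poly_eq_iff)
  then show ?thesis by (metis proots_lin_prod)
qed

definition EP where "EP m d x L \<longleftrightarrow> size L = d \<and>
   (\<forall>t::real. peval m (ced m d) (\<lambda>i. t * ev m i - x i) = peval m (ced m d) (ev m) * (\<Prod>l\<in>#L. (t - l)))"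

lemma EP_unique:
  assumes "d \<le> m" "EP m d x L" "EP m d x L'"
  shows "L = L'"
proof -
  have c: "peval m (ced m d) (ev m) \<noteq> 0" using assms(1) by (simp add: peval_e)
  have "\<forall>t. (\<Prod>l\<in>#L. (t - l)) = (\<Prod>l\<in>#L'. (t - l))"
    using assms(2,3) c unfolding EP_def by auto
  then show ?thesis by (rule lin_prod_unique)
qed

lemma of_real_prod_mset: "of_real (\<Prod>z\<in>#M. f z) = (\<Prod>z\<in>#M. (of_real (f z) :: 'a::{real_algebra_1,comm_ring_1}))"
  by (induction M) auto

lemma EP_exists:
  assumes dm: "d \<le> m"
  shows "\<exists>L. EP m d x L"
proof -
  let ?P = "es (\<lambda>i. [:-complex_of_real (x i), 1:]) m d"
  have rr: "?P \<noteq> 0 \<and> (\<forall>z. poly ?P z = 0 \<longrightarrow> z \<in> \<real>)"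
    using es_real_rooted[of m "\<lambda>i. complex_of_real (x i)" d] dm by auto
  have deg: "degree ?P = d" using es_degree[OF dm, of "\<lambda>i. - complex_of_real (x i)"] by simp
  have lc: "lead_coeff ?P = of_nat (m choose d)" using deg es_lead[OF dm, of "\<lambda>i. - complex_of_real (x i)"] by simp
  define R where "R = proots ?P"
  have Rr: "\<forall>z\<in>#R. z \<in> \<real>" using rr unfolding R_def by simp
  have dec: "?P = smult (of_nat (m choose d)) (\<Prod>z\<in>#R. [:-z, 1:])"
    using complex_poly_decompose_multiset[of ?P] lc unfolding R_def by simp
  define L where "L = image_mset Re R"
  have sz: "size L = d" unfolding L_def R_def using size_proots_complex[of ?P] deg by simp
  have "peval m (ced m d) (\<lambda>i. t * ev m i - x i) = peval m (ced m d) (ev m) * (\<Prod>l\<in>#L. (t - l))" for t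
  proof -
    have "complex_of_real (peval m (ced m d) (\<lambda>i. t * ev m i - x i)) = es (\<lambda>i. complex_of_real (t - x i)) m d"
      unfolding peval_shift_real by (rule es_of_real[symmetric])
    also have "\<dots> = poly ?P (complex_of_real t)" by (simp add: es_poly)
    also have "\<dots> = of_nat (m choose d) * (\<Prod>z\<in>#R. (complex_of_real t - z))"
      by (subst dec) (simp add: poly_prod_mset)
    also have "(\<Prod>z\<in>#R. (complex_of_real t - z)) = (\<Prod>z\<in>#R. complex_of_real (t - Re z))"
    proof -
      have "\<And>z. z \<in># R \<Longrightarrow> complex_of_real t - z = complex_of_real (t - Re z)"
        using Rr by (auto elim!: Reals_cases)
      then have "image_mset (\<lambda>z. complex_of_real t - z) R = image_mset (\<lambda>z. complex_of_real (t - Re z)) R"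
        by (rule image_mset_cong)
      then show ?thesis by (simp only:)
    qed
    also have "\<dots> = complex_of_real (\<Prod>l\<in>#L. (t - l))"
      by (simp only: L_def of_real_prod_mset multiset.map_comp comp_def)
    finally have "complex_of_real (peval m (ced m d) (\<lambda>i. t * ev m i - x i)) =
       complex_of_real (real (m choose d) * (\<Prod>l\<in>#L. (t - l)))" by simp
    then show ?thesis by (simp only: of_real_eq_iff peval_e)
  qed
  then show ?thesis using sz unfolding EP_def by blast
qed

lemma eigs_EP:
  assumes "d \<le> m"
  shows "EP m d x (eigs m d (ced m d) (ev m) x)"
proof -
  have "\<exists>!L. EP m d x L" using EP_exists[OF assms] EP_unique[OF assms] by blast
  then have "EP m d x (THE L. EP m d x L)" by (rule theI')
  then show ?thesis unfolding eigs_def EP_def .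
qed

lemma eigs_eq:
  assumes "d \<le> m" "EP m d x L"
  shows "eigs m d (ced m d) (ev m) x = L"
  using EP_unique[OF assms(1) eigs_EP[OF assms(1)] assms(2)] .

lemma es_two:
  assumes "P \<subseteq> {..<m}"
  shows "es (\<lambda>i. if i \<in> P then a else b) m j = coeff ([:1, a:] ^ card P * [:1, b:] ^ (m - card P)) j"
proof -
  have fP: "finite P" using assms finite_subset by blast
  have "(\<Prod>i<m. [:1, if i \<in> P then a else b:]) = (\<Prod>i<m. if i \<in> P then [:1, a:] else [:1, b:])"
    by (rule prod.cong) auto
  also have "\<dots> = [:1, a:] ^ card ({..<m} \<inter> {i. i \<in> P}) * [:1, b:] ^ card ({..<m} \<inter> - {i. i \<in> P})"
    by (simp add: prod.If_cases)
  also have "{..<m} \<inter> {i. i \<in> P} = P" using assms by auto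
  also have "card ({..<m} \<inter> - {i. i \<in> P}) = m - card P"
  proof -
    have "{..<m} \<inter> - {i. i \<in> P} = {..<m} - P" by auto
    then show ?thesis using assms fP by (simp add: card_Diff_subset)
  qed
  finally show ?thesis by (simp add: es_gen)
qed

lemma coeff_pow_lin: "coeff ([:1, b:] ^ n) j = of_nat (n choose j) * (b::'a::comm_ring_1) ^ j"
proof -
  have "coeff ([:1, b:] ^ n) j = coeff (\<Prod>i<n. [:1, (\<lambda>_. b) i:]) j" by simp
  also have "\<dots> = es (\<lambda>_. b) n j" by (simp only: es_gen)
  finally show ?thesis by (simp add: es_const)
qed

lemma coeff_lin1_mult: "coeff ([:1, a:] * (p::'a::comm_ring_1 poly)) (Suc j) = coeff p (Suc j) + a * coeff p j"
  by simp

lemma es_coord: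
  assumes "i0 < m" "1 \<le> d" "d \<le> m"
  shows "es (\<lambda>i. t - (if i = i0 then 1 else 0)) m d = real (m choose d) * ((t - real d / real m) * t ^ (d - 1))"
proof -
  obtain d' where d': "d = Suc d'" using assms by (cases d) auto
  obtain m' where m': "m = Suc m'" using assms by (cases m) auto
  have "es (\<lambda>i. t - (if i = i0 then 1 else 0)) m d = es (\<lambda>i. if i \<in> {i0} then t - 1 else t) m d"
    by (rule es_cong) auto
  also have "\<dots> = coeff ([:1, t - 1:] ^ 1 * [:1, t:] ^ m') d"
    using es_two[of "{i0}" m "t - 1" t d] assms m' by simp
  also have "\<dots> = real (m' choose Suc d') * t ^ Suc d' + (t - 1) * (real (m' choose d') * t ^ d')"
    unfolding d' by (simp only: power_one_right coeff_lin1_mult coeff_pow_lin)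
  also have "\<dots> = real (m choose d) * ((t - real d / real m) * t ^ (d - 1))"
  proof -
    have b1: "real (m choose d) = real (m' choose Suc d') + real (m' choose d')"
      unfolding m' d' by simp
    have b2: "real m * real (m' choose d') = real d * real (m choose d)"
    proof -
      have "Suc d' * (Suc m' choose Suc d') = Suc m' * (m' choose d')" by (rule Suc_times_binomial)
      then show ?thesis unfolding m' d' by (metis of_nat_mult)
    qed
    have mpos: "real m > 0" using assms by simp
    have "real (m choose d) * ((t - real d / real m) * t ^ (d - 1)) =
          real (m choose d) * t ^ Suc d' - (real d * real (m choose d) / real m) * t ^ d'"
      unfolding d' by (simp add: algebra_simps)
    also have "real d * real (m choose d) / real m = real (m' choose d')"
      using b2 mpos by (simp add: field_simps)
    finally show ?thesis unfolding b1 by (simp add: algebra_simps)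
  qed
  finally show ?thesis .
qed

lemma EP_coord:
  assumes "i0 < m" "1 \<le> d" "d \<le> m"
  shows "EP m d (\<lambda>l. if l = i0 then 1 else 0) (add_mset (real d / real m) (replicate_mset (d - 1) 0))"
  unfolding EP_def
proof (intro conjI allI)
  show "size (add_mset (real d / real m) (replicate_mset (d - 1) 0)) = d" using assms by simp
next
  fix t :: real
  show "peval m (ced m d) (\<lambda>i. t * ev m i - (if i = i0 then 1 else 0)) =
        peval m (ced m d) (ev m) * (\<Prod>l\<in>#add_mset (real d / real m) (replicate_mset (d - 1) 0). t - l)"
    unfolding peval_shift_real peval_e es_coord[OF assms] by simp
qed

lemma coeff_prod_nonneg:
  assumes "\<forall>l\<in>#L. 0 \<le> f l"
  shows "0 \<le> coeff (\<Prod>l\<in>#L. [:f l, 1:] :: real poly) j"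
  using assms
proof (induction L arbitrary: j)
  case empty then show ?case by (cases j) auto
next
  case (add x L)
  then show ?case by (simp add: coeff_lin_mult del: mult_pCons_left)
qed

lemma EP_nonneg:
  assumes dm: "d \<le> m" and ep: "EP m d x L" and le: "\<forall>l\<in>#L. l \<le> \<beta>" and nd: "n \<le> d"
  shows "0 \<le> es (\<lambda>i. \<beta> - x i) m n"
proof -
  have "poly (es (\<lambda>i. [:\<beta> - x i, 1:]) m d) y = poly (smult (real (m choose d)) (\<Prod>l\<in>#L. [:\<beta> - l, 1:])) y" for y
  proof -
    have "poly (es (\<lambda>i. [:\<beta> - x i, 1:]) m d) y = es (\<lambda>i. (\<beta> + y) - x i) m d"
      by (simp add: es_poly algebra_simps)
    also have "\<dots> = peval m (ced m d) (\<lambda>i. (\<beta> + y) * ev m i - x i)" by (simp add: peval_shift_real)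
    also have "\<dots> = real (m choose d) * (\<Prod>l\<in>#L. ((\<beta> + y) - l))"
      using ep unfolding EP_def by (simp add: peval_e)
    also have "\<dots> = poly (smult (real (m choose d)) (\<Prod>l\<in>#L. [:\<beta> - l, 1:])) y"
      by (simp add: poly_prod_mset algebra_simps)
    finally show ?thesis .
  qed
  then have eq: "es (\<lambda>i. [:\<beta> - x i, 1:]) m d = smult (real (m choose d)) (\<Prod>l\<in>#L. [:\<beta> - l, 1:])"
    by (simp add: poly_eq_poly_eq_iff[symmetric] fun_eq_iff)
  define j where "j = d - n"
  have jd: "j \<le> d" and nj: "n = d - j" using nd unfolding j_def by auto
  have "coeff (es (\<lambda>i. [:\<beta> - x i, 1:]) m d) j = real ((m - d + j) choose j) * es (\<lambda>i. \<beta> - x i) m (d - j)"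
    using coeff_es[OF jd dm, of "\<lambda>i. \<beta> - x i"] by simp
  moreover have "0 \<le> coeff (\<Prod>l\<in>#L. [:\<beta> - l, 1:]) j"
    using coeff_prod_nonneg[of L "\<lambda>l. \<beta> - l" j] le by simp
  ultimately have "0 \<le> real ((m - d + j) choose j) * es (\<lambda>i. \<beta> - x i) m (d - j)"
    using eq by (metis coeff_smult mult_nonneg_nonneg of_nat_0_le_iff)
  moreover have "real ((m - d + j) choose j) > 0" by simp
  ultimately show ?thesis unfolding nj by (simp add: zero_le_mult_iff)
qed

lemma const_mult_poly: "[:a:] * p = smult a p"
  by simp

lemma pow_deriv_mul: "pderiv (p ^ n) * p = smult (of_nat n) (p ^ n) * pderiv (p::'a::idom poly)"
proof (cases n)
  case 0 then show ?thesis by simp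
next
  case (Suc k)
  have "pderiv (p ^ Suc k) * p = smult (of_nat (Suc k)) (p ^ k) * pderiv p * p"
    by (simp only: pderiv_power_Suc)
  also have "\<dots> = smult (of_nat (Suc k)) (p ^ k * p) * pderiv p"
    by (simp only: mult_smult_left mult_smult_right mult_ac)
  also have "p ^ k * p = p ^ Suc k" by (simp only: power_Suc2)
  finally show ?thesis using Suc by simp
qed

lemma ode:
  fixes \<beta> :: real
  defines "p \<equiv> [:1, \<beta> - 1:]" and "q \<equiv> [:1, \<beta>:]"
  shows "[:1, 2*\<beta> - 1, \<beta>*(\<beta> - 1):] * pderiv (p ^ s * q ^ r) =
         [:real s * (\<beta> - 1) + real r * \<beta>, real (s + r) * \<beta> * (\<beta> - 1):] * (p ^ s * q ^ r)"
proof -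
  define P where "P = p ^ s"
  define Q where "Q = q ^ r"
  have pq: "[:1, 2*\<beta> - 1, \<beta>*(\<beta> - 1):] = p * q" unfolding p_def q_def by (simp add: algebra_simps)
  have dp: "pderiv p = [:\<beta> - 1:]" unfolding p_def by (simp add: pderiv_pCons)
  have dq: "pderiv q = [:\<beta>:]" unfolding q_def by (simp add: pderiv_pCons)
  have DP: "pderiv P * p = smult (real s * (\<beta> - 1)) P"
    unfolding P_def pow_deriv_mul dp by (simp add: const_mult_poly mult.commute del: mult_pCons_left)
  have DQ: "pderiv Q * q = smult (real r * \<beta>) Q"
    unfolding Q_def pow_deriv_mul dq by (simp add: const_mult_poly mult.commute del: mult_pCons_left)
  have "p * q * pderiv (P * Q) = P * (pderiv Q * q) * p + Q * (pderiv P * p) * q"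
    by (simp only: pderiv_mult distrib_left mult_ac)
  also have "\<dots> = P * Q * (smult (real r * \<beta>) p + smult (real s * (\<beta> - 1)) q)"
    unfolding DP DQ by (simp only: mult_smult_left mult_smult_right smult_add_right distrib_left mult_ac)
  also have "smult (real r * \<beta>) p + smult (real s * (\<beta> - 1)) q =
     [:real s * (\<beta> - 1) + real r * \<beta>, real (s + r) * \<beta> * (\<beta> - 1):]"
    unfolding p_def q_def by (simp add: algebra_simps)
  finally show ?thesis unfolding pq P_def Q_def by (simp only: mult_ac)
qed

lemma coeff_rel:
  fixes G :: "real poly"
  assumes "[:1, b1, b2:] * pderiv G = [:K, M:] * G"
  shows "real (Suc (Suc k)) * coeff G (Suc (Suc k)) + b1 * (real (Suc k) * coeff G (Suc k))
         + (if k = 0 then 0 else b2 * (real k * coeff G k)) = K * coeff G (Suc k) + M * coeff G k"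
proof -
  have "coeff ([:1, b1, b2:] * pderiv G) (Suc k) = coeff ([:K, M:] * G) (Suc k)" using assms by simp
  then show ?thesis by (cases k) (simp_all add: coeff_pderiv)
qed

lemma recur:
  fixes \<beta> :: real
  assumes "s \<le> m" "1 \<le> n"
  defines "c \<equiv> \<lambda>j. coeff ([:1, \<beta> - 1:] ^ s * [:1, \<beta>:] ^ (m - s)) j"
  shows "real (n + 1) * c (n + 1) = (real m * \<beta> - real s - real n * (2*\<beta> - 1)) * c n
           - \<beta> * (1 - \<beta>) * (real m - real n + 1) * c (n - 1)"
proof -
  let ?G = "[:1, \<beta> - 1:] ^ s * [:1, \<beta>:] ^ (m - s)"
  obtain k where k: "n = Suc k" using assms by (cases n) auto
  have E: "[:1, 2*\<beta> - 1, \<beta>*(\<beta> - 1):] * pderiv ?G =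
         [:real s * (\<beta> - 1) + real (m - s) * \<beta>, real (s + (m - s)) * \<beta> * (\<beta> - 1):] * ?G"
    by (rule ode)
  have R: "real (Suc (Suc k)) * c (Suc (Suc k)) + (2*\<beta> - 1) * (real (Suc k) * c (Suc k))
      + (if k = 0 then 0 else \<beta>*(\<beta> - 1) * (real k * c k))
      = (real s * (\<beta> - 1) + real (m - s) * \<beta>) * c (Suc k) + real (s + (m - s)) * \<beta> * (\<beta> - 1) * c k"
    unfolding c_def by (rule coeff_rel[OF E])
  have ms: "real (m - s) = real m - real s" "real (s + (m - s)) = real m" using assms(1) by auto
  define c2 c1 c0 where "c2 = c (Suc (Suc k))" and "c1 = c (Suc k)" and "c0 = c k"
  have R': "real k + 2 = real (Suc (Suc k))" "real k + 1 = real (Suc k)" by auto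
  have R2: "(real k + 2) * c2 = (real s * (\<beta> - 1) + (real m - real s) * \<beta>) * c1 + real m * \<beta> * (\<beta> - 1) * c0
      - (2*\<beta> - 1) * ((real k + 1) * c1) - \<beta>*(\<beta> - 1) * (real k * c0)"
    using R unfolding ms c2_def[symmetric] c1_def[symmetric] c0_def[symmetric] R'[symmetric]
    by (cases "k = 0") simp_all
  have "(real k + 2) * c2 = (real m * \<beta> - real s - (real k + 1) * (2*\<beta> - 1)) * c1
           - \<beta> * (1 - \<beta>) * (real m - (real k + 1) + 1) * c0"
    unfolding R2 by (simp add: algebra_simps)
  then show ?thesis unfolding k c2_def c1_def c0_def by (simp add: add.commute)
qed

lemma c_zero: "coeff ([:1, a:] ^ s * [:1, b:] ^ r) 0 = (1::real)"
  by (simp add: poly_0_coeff_0[symmetric] del: poly_0_coeff_0)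

lemma osc_contra:
  fixes c A Bq y :: "nat \<Rightarrow> real" and \<delta> :: real
  assumes c0: "c 0 > 0"
    and rec: "\<And>n. 1 \<le> n \<Longrightarrow> n + 1 \<le> d \<Longrightarrow> real (n + 1) * c (n + 1) = A n * c n - Bq n * c (n - 1)"
    and Bpos: "\<And>n. 1 \<le> n \<Longrightarrow> n + 1 \<le> d \<Longrightarrow> Bq n > 0"
    and nn: "\<And>n. n \<le> d \<Longrightarrow> c n \<ge> 0"
    and n0: "1 \<le> n0" "n0 + L + 1 \<le> d"
    and \<delta>: "\<delta> > 0" "real L * \<delta> > A n0 / real (n0 + 1)"
    and win: "\<And>n. n0 + 1 \<le> n \<Longrightarrow> n \<le> n0 + L \<Longrightarrow>
               A n + real (n + 1) * \<delta> \<le> y n \<and> 0 \<le> y n \<and> (y n)^2 \<le> 4 * real (n + 1) * Bq n"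
  shows False
proof -
  have pos: "c n > 0" if "n + 1 \<le> d" for n
    using that
  proof (induction n)
    case 0 then show ?case using c0 by simp
  next
    case (Suc n)
    have cn: "c n > 0" using Suc by simp
    show ?case
    proof (rule ccontr)
      assume "\<not> c (Suc n) > 0"
      then have z: "c (Suc n) = 0" using nn[of "Suc n"] Suc.prems by simp
      have e: "real (Suc n + 1) * c (Suc n + 1) = - Bq (Suc n) * c n"
        using rec[of "Suc n"] Suc.prems z by simp
      have b: "Bq (Suc n) * c n > 0" using Bpos[of "Suc n"] Suc.prems cn by simp
      have "c (Suc n + 1) \<ge> 0" using nn[of "Suc n + 1"] Suc.prems by simp
      then have "real (Suc n + 1) * c (Suc n + 1) \<ge> 0" by simp
      then show False using e b by linarith
    qed
  qed
  define \<rho> where "\<rho> n = c n / c (n - 1)" for n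
  have step: "\<rho> (n + 1) \<le> \<rho> n - \<delta>" if "n0 + 1 \<le> n" "n \<le> n0 + L" for n
  proof -
    have n1: "1 \<le> n" "n + 1 \<le> d" using that n0 by auto
    have cn: "c n > 0" and cn1: "c (n - 1) > 0" using pos n1 by auto
    define r where "r = \<rho> n"
    have r: "r > 0" unfolding r_def \<rho>_def using cn cn1 by simp
    define N where "N = real (n + 1)"
    have N: "N > 0" unfolding N_def by simp
    have B: "Bq n > 0" using Bpos n1 by simp
    have W: "A n + N * \<delta> \<le> y n" "0 \<le> y n" "(y n)^2 \<le> 4 * N * Bq n" using win[OF that] unfolding N_def by auto
    have "\<rho> (n + 1) = (A n - Bq n / r) / N"
    proof -
      have "c (n + 1) = (A n * c n - Bq n * c (n - 1)) / N" using rec[OF n1] N unfolding N_def by (simp add: field_simps)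
      then have "\<rho> (n + 1) = (A n * c n - Bq n * c (n - 1)) / (N * c n)" unfolding \<rho>_def by simp
      also have "\<dots> = (A n - Bq n / r) / N" unfolding r_def \<rho>_def using cn cn1 N by (simp add: field_simps)
      finally show ?thesis .
    qed
    moreover have "y n \<le> N * r + Bq n / r"
    proof -
      have "(N * r + Bq n / r)^2 - 4 * N * Bq n = (N * r - Bq n / r)^2"
        using r by (simp add: power2_eq_square field_simps)
      moreover have "0 \<le> (N * r - Bq n / r)^2" by simp
      ultimately have "(y n)^2 \<le> (N * r + Bq n / r)^2" using W(3) by linarith
      moreover have "N * r + Bq n / r \<ge> 0" using N r B by (simp add: add_nonneg_nonneg)
      ultimately show ?thesis using power2_le_imp_le by blast
    qed
    ultimately have "\<rho> (n + 1) \<le> (N * r - N * \<delta>) / N"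
      using W(1) N by (simp add: divide_right_mono)
    also have "\<dots> = r - \<delta>" using N by (simp add: field_simps)
    finally show ?thesis unfolding r_def .
  qed
  have first: "\<rho> (n0 + 1) < A n0 / real (n0 + 1)"
  proof -
    have n1: "1 \<le> n0" "n0 + 1 \<le> d" using n0 by auto
    have cn: "c n0 > 0" and cn1: "c (n0 - 1) > 0" using pos n1 by auto
    have "real (n0 + 1) * c (n0 + 1) < A n0 * c n0" using rec[OF n1] Bpos[OF n1] cn1 by simp
    then have "c (n0 + 1) < A n0 * c n0 / real (n0 + 1)" by (simp add: field_simps)
    then show ?thesis unfolding \<rho>_def using cn by (simp add: field_simps)
  qed
  have iter: "\<rho> (n0 + 1 + i) < A n0 / real (n0 + 1) - real i * \<delta>" if "i \<le> L" for i
    using that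
  proof (induction i)
    case 0 then show ?case using first by simp
  next
    case (Suc i)
    have "\<rho> (n0 + 1 + i + 1) \<le> \<rho> (n0 + 1 + i) - \<delta>" using step[of "n0 + 1 + i"] Suc.prems by simp
    then show ?case using Suc by (simp add: algebra_simps)
  qed
  have "\<rho> (n0 + 1 + L) < 0" using iter[of L] \<delta> by simp
  moreover have "\<rho> (n0 + 1 + L) \<ge> 0"
  proof -
    have "c (n0 + 1 + L) \<ge> 0" using nn n0 by simp
    moreover have "c (n0 + L) > 0" using pos n0 by simp
    ultimately show ?thesis unfolding \<rho>_def by simp
  qed
  ultimately show False by simp
qed

lemma beta_choice:
  fixes k :: nat and \<epsilon> B :: real
  assumes k2: "k \<ge> 2" and e0: "0 < \<epsilon>" and e1: "\<epsilon> \<le> 1 - 1 / real k"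
    and hB: "B < 1 / real k + \<epsilon> * (real k - 2) / real k + 2 * sqrt (real k - 1) / real k * sqrt (\<epsilon> - \<epsilon>^2)"
  shows "\<exists>\<beta>. B < \<beta> \<and> 0 < \<beta> \<and> \<beta> < 1 \<and> \<beta> - 1 / real k - \<epsilon> * (2 * \<beta> - 1) < sqrt (4 * \<beta> * (1 - \<beta>) * \<epsilon> * (1 - \<epsilon>))"
proof -
  define \<delta> where "\<delta> = 1 / real k"
  define P0 where "P0 = 1 / real k + \<epsilon> * (real k - 2) / real k"
  define Q0 where "Q0 = 2 * sqrt (real k - 1) / real k * sqrt (\<epsilon> - \<epsilon>^2)"
  have kpos: "real k > 0" using k2 by simp
  have k1: "real k - 1 > 0" using k2 by simp
  have d0: "0 < \<delta>" and d1: "\<delta> < 1" unfolding \<delta>_def using k2 by auto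
  have "1 / real k > 0" using kpos by simp
  then have el1: "\<epsilon> < 1" using e1 by linarith
  have "\<epsilon> - \<epsilon>^2 = \<epsilon> * (1 - \<epsilon>)" by (simp add: power2_eq_square algebra_simps)
  moreover have "\<epsilon> * (1 - \<epsilon>) > 0" using e0 el1 by simp
  ultimately have ee: "\<epsilon> - \<epsilon>^2 > 0" by simp
  have P0eq: "P0 = \<epsilon> + \<delta> - 2 * \<epsilon> * \<delta>" unfolding P0_def \<delta>_def using kpos by (simp add: field_simps)
  have Q0pos: "Q0 > 0" unfolding Q0_def using k1 kpos ee by simp
  have Q0sq: "Q0^2 = 4 * \<delta> * (1 - \<delta>) * \<epsilon> * (1 - \<epsilon>)"
  proof -
    have "Q0^2 = 4 * (sqrt (real k - 1))^2 / (real k)^2 * (sqrt (\<epsilon> - \<epsilon>^2))^2"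
      unfolding Q0_def by (simp add: power_mult_distrib power_divide)
    also have "\<dots> = 4 * (real k - 1) / (real k)^2 * (\<epsilon> - \<epsilon>^2)" using k1 ee by simp
    also have "\<dots> = 4 * \<delta> * (1 - \<delta>) * \<epsilon> * (1 - \<epsilon>)"
      unfolding \<delta>_def using kpos by (simp add: field_simps power2_eq_square)
    finally show ?thesis .
  qed
  define a where "a = (1 - \<epsilon>) * (1 - \<delta>)"
  define b where "b = \<epsilon> * \<delta>"
  have a0: "a \<ge> 0" unfolding a_def using el1 d1 by simp
  have b0: "b > 0" unfolding b_def using e0 d0 by simp
  have oneP: "1 - P0 = a + b" unfolding P0eq a_def b_def by (simp add: algebra_simps)
  have Qab: "Q0^2 = 4 * a * b" unfolding Q0sq a_def b_def by (simp add: algebra_simps)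
  have hi1: "P0 + Q0 \<le> 1"
  proof -
    have "(a + b)^2 - 4 * a * b = (a - b)^2" by (simp add: power2_eq_square algebra_simps)
    moreover have "0 \<le> (a - b)^2" by simp
    ultimately have "Q0^2 \<le> (1 - P0)^2" unfolding oneP Qab by linarith
    moreover have "0 \<le> 1 - P0" using oneP a0 b0 by linarith
    ultimately have "Q0 \<le> 1 - P0" by (rule power2_le_imp_le)
    then show ?thesis by simp
  qed
  have "P0 = \<epsilon> * (1 - \<delta>) + \<delta> * (1 - \<epsilon>)" unfolding P0eq by (simp add: algebra_simps)
  moreover have "\<epsilon> * (1 - \<delta>) > 0" "\<delta> * (1 - \<epsilon>) > 0" using e0 el1 d0 d1 by simp_all
  ultimately have P0pos: "P0 > 0" by linarith
  have Bm1: "P0 - Q0 < 1" using oneP a0 b0 Q0pos by linarith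
  have hB': "B < P0 + Q0" using hB by (simp only: P0_def Q0_def)
  define lo where "lo = max (max B (P0 - Q0)) 0"
  define hi where "hi = min (P0 + Q0) 1"
  have lohi: "lo < hi" unfolding lo_def hi_def using hB' hi1 Q0pos P0pos Bm1 by (auto simp: max_def min_def)
  define \<beta> where "\<beta> = (lo + hi) / 2"
  have bl: "lo < \<beta>" and bh: "\<beta> < hi" unfolding \<beta>_def using lohi by auto
  have b1: "B < \<beta>" "P0 - Q0 < \<beta>" "0 < \<beta>" using bl unfolding lo_def by simp_all
  have b2: "\<beta> < P0 + Q0" "\<beta> < 1" using bh unfolding hi_def by simp_all
  define g where "g = \<beta> - 1 / real k - \<epsilon> * (2 * \<beta> - 1)"
  have key: "g < sqrt (4 * \<beta> * (1 - \<beta>) * \<epsilon> * (1 - \<epsilon>))"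
  proof (cases "g < 0")
    case True
    moreover have "0 \<le> sqrt (4 * \<beta> * (1 - \<beta>) * \<epsilon> * (1 - \<epsilon>))"
      using b1 b2 e0 el1 by (intro real_sqrt_ge_zero mult_nonneg_nonneg) simp_all
    ultimately show ?thesis by linarith
  next
    case False
    have id: "g^2 - 4 * \<beta> * (1 - \<beta>) * \<epsilon> * (1 - \<epsilon>) = (\<beta> - (P0 - Q0)) * (\<beta> - (P0 + Q0))"
    proof -
      have "(\<beta> - (P0 - Q0)) * (\<beta> - (P0 + Q0)) = (\<beta> - P0)^2 - Q0^2" by (simp add: power2_eq_square algebra_simps)
      also have "\<dots> = g^2 - 4 * \<beta> * (1 - \<beta>) * \<epsilon> * (1 - \<epsilon>)"
        unfolding Q0sq P0eq g_def \<delta>_def[symmetric] by (simp add: power2_eq_square algebra_simps)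
      finally show ?thesis by simp
    qed
    have "(\<beta> - (P0 - Q0)) * (\<beta> - (P0 + Q0)) < 0" using b1 b2 by (simp add: mult_pos_neg)
    then have "g^2 < 4 * \<beta> * (1 - \<beta>) * \<epsilon> * (1 - \<epsilon>)" using id by linarith
    then show ?thesis by (rule real_less_rsqrt)
  qed
  show ?thesis using b1 b2 key unfolding g_def by blast
qed


lemma cont_eta:
  fixes \<beta> c :: real
  assumes F0: "sqrt (4 * \<beta> * (1 - \<beta>) * \<epsilon> * (1 - \<epsilon>)) - (\<beta> - c - \<epsilon> * (2 * \<beta> - 1)) > 0"
  shows "\<exists>\<eta>>0. \<forall>\<nu>. \<bar>\<nu> - \<epsilon>\<bar> < \<eta> \<longrightarrow>
      sqrt (4 * \<beta> * (1 - \<beta>) * \<nu> * (1 - \<nu>)) - (\<beta> - c - \<nu> * (2 * \<beta> - 1)) >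
      (sqrt (4 * \<beta> * (1 - \<beta>) * \<epsilon> * (1 - \<epsilon>)) - (\<beta> - c - \<epsilon> * (2 * \<beta> - 1))) / 2"
proof -
  define F where "F \<nu> = sqrt (4 * \<beta> * (1 - \<beta>) * \<nu> * (1 - \<nu>)) - (\<beta> - c - \<nu> * (2 * \<beta> - 1))" for \<nu>
  have "isCont F \<epsilon>" unfolding F_def by (intro continuous_intros)
  then have "F \<midarrow>\<epsilon>\<rightarrow> F \<epsilon>" by (simp add: isCont_def)
  moreover have "F \<epsilon> / 2 > 0" using F0 unfolding F_def by simp
  ultimately obtain s where s: "s > 0" "\<forall>x. x \<noteq> \<epsilon> \<and> norm (x - \<epsilon>) < s \<longrightarrow> norm (F x - F \<epsilon>) < F \<epsilon> / 2"
    using LIM_D by blast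
  have "\<forall>\<nu>. \<bar>\<nu> - \<epsilon>\<bar> < s \<longrightarrow> F \<nu> > F \<epsilon> / 2"
  proof (intro allI impI)
    fix \<nu> assume h: "\<bar>\<nu> - \<epsilon>\<bar> < s"
    show "F \<nu> > F \<epsilon> / 2"
    proof (cases "\<nu> = \<epsilon>")
      case True then show ?thesis using \<open>F \<epsilon> / 2 > 0\<close> by simp
    next
      case False
      then have "\<bar>F \<nu> - F \<epsilon>\<bar> < F \<epsilon> / 2" using s(2) h by auto
      then show ?thesis by linarith
    qed
  qed
  then show ?thesis using s(1) unfolding F_def by blast
qed

lemma window_ok:
  fixes \<beta> \<delta> :: real and m n s k :: nat
  assumes b: "0 < \<beta>" "\<beta> < 1" and sk: "real s \<ge> real m / real k" and nm: "n \<le> m" and m1: "1 \<le> m"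
    and F: "sqrt (4 * \<beta> * (1 - \<beta>) * (real n / real m) * (1 - real n / real m))
            - (\<beta> - 1 / real k - (real n / real m) * (2 * \<beta> - 1)) > 2 * \<delta>"
    and d0: "\<delta> > 0"
  defines "y \<equiv> real m * sqrt (4 * \<beta> * (1 - \<beta>) * (real n / real m) * (1 - real n / real m))"
  shows "(real m * \<beta> - real s - real n * (2 * \<beta> - 1)) + real (n + 1) * \<delta> \<le> y \<and> 0 \<le> y \<and>
         y^2 \<le> 4 * real (n + 1) * (\<beta> * (1 - \<beta>) * (real m - real n + 1))"
proof -
  define \<nu> where "\<nu> = real n / real m"
  have mpos: "real m > 0" using m1 by simp
  have nu0: "0 \<le> \<nu>" and nu1: "\<nu> \<le> 1" unfolding \<nu>_def using nm mpos by (auto simp: divide_le_eq_1)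
  define X where "X = 4 * \<beta> * (1 - \<beta>) * \<nu> * (1 - \<nu>)"
  have X0: "X \<ge> 0" unfolding X_def using b nu0 nu1 by (intro mult_nonneg_nonneg) simp_all
  have y: "y = real m * sqrt X" unfolding y_def X_def \<nu>_def ..
  have y0: "0 \<le> y" unfolding y using X0 mpos by simp
  have ysq: "y^2 = 4 * \<beta> * (1 - \<beta>) * real n * (real m - real n)"
  proof -
    have "y^2 = (real m)^2 * X" unfolding y using X0 by (simp add: power_mult_distrib)
    also have "\<dots> = 4 * \<beta> * (1 - \<beta>) * ((real m * \<nu>) * (real m - real m * \<nu>))"
      unfolding X_def by (simp add: power2_eq_square algebra_simps)
    also have "real m * \<nu> = real n" unfolding \<nu>_def using mpos by simp
    finally show ?thesis by (simp add: algebra_simps)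
  qed
  have "real n * (real m - real n) \<le> real (n + 1) * (real m - real n + 1)"
    using nm by (simp add: algebra_simps)
  moreover have K0: "4 * \<beta> * (1 - \<beta>) \<ge> 0" using b by simp
  ultimately have "(4 * \<beta> * (1 - \<beta>)) * (real n * (real m - real n)) \<le> (4 * \<beta> * (1 - \<beta>)) * (real (n + 1) * (real m - real n + 1))"
    by (intro mult_left_mono)
  moreover have "y^2 = (4 * \<beta> * (1 - \<beta>)) * (real n * (real m - real n))" unfolding ysq by (simp only: mult.assoc)
  moreover have "(4 * \<beta> * (1 - \<beta>)) * (real (n + 1) * (real m - real n + 1)) = 4 * real (n + 1) * (\<beta> * (1 - \<beta>) * (real m - real n + 1))"
    by (simp only: mult_ac)
  ultimately have y2: "y^2 \<le> 4 * real (n + 1) * (\<beta> * (1 - \<beta>) * (real m - real n + 1))" by linarith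
  have s1: "real m / real k \<le> real s" by (rule sk)
  have n2: "real (n + 1) \<le> 2 * real m" using nm m1 by simp
  have Fm: "real m * (sqrt X - (\<beta> - 1 / real k - \<nu> * (2 * \<beta> - 1))) > real m * (2 * \<delta>)"
    using F mpos unfolding X_def \<nu>_def by (intro mult_strict_left_mono)
  have mn: "real m * \<nu> = real n" unfolding \<nu>_def using mpos by simp
  have eqT: "real m * (\<beta> - 1 / real k - \<nu> * (2 * \<beta> - 1)) = real m * \<beta> - real m / real k - real n * (2 * \<beta> - 1)"
  proof -
    have "real m * (\<beta> - 1 / real k - \<nu> * (2 * \<beta> - 1)) = real m * \<beta> - real m * (1 / real k) - (real m * \<nu>) * (2 * \<beta> - 1)"
      by (simp only: right_diff_distrib mult.assoc)
    then show ?thesis unfolding mn by simp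
  qed
  have Fm2: "y - (real m * \<beta> - real m / real k - real n * (2 * \<beta> - 1)) > real m * (2 * \<delta>)"
  proof -
    have e1: "real m * (sqrt X - (\<beta> - 1 / real k - \<nu> * (2 * \<beta> - 1))) = y - real m * (\<beta> - 1 / real k - \<nu> * (2 * \<beta> - 1))"
      unfolding y by (rule right_diff_distrib)
    show ?thesis using Fm e1 eqT by linarith
  qed
  have "real (n + 1) * \<delta> \<le> 2 * real m * \<delta>" using n2 d0 by (intro mult_right_mono) simp_all
  then have "(real m * \<beta> - real s - real n * (2 * \<beta> - 1)) + real (n + 1) * \<delta> \<le> y"
    using Fm2 s1 by (simp only: mult_ac)
  then show ?thesis using y0 y2 by blast
qed

lemma pigeon:
  fixes S :: "nat \<Rightarrow> nat"
  assumes "\<forall>i<m. S i < k" "k > 0"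
  shows "\<exists>j<k. real (card {i. i < m \<and> S i = j}) \<ge> real m / real k"
proof (rule ccontr)
  assume "\<not> ?thesis"
  then have lt: "\<forall>j<k. real (card {i. i < m \<and> S i = j}) < real m / real k" by auto
  have U: "{..<m} = (\<Union>j\<in>{..<k}. {i. i < m \<and> S i = j})" using assms(1) by auto
  have "m = card (\<Union>j\<in>{..<k}. {i. i < m \<and> S i = j})" using U by (metis card_lessThan)
  also have "\<dots> = (\<Sum>j<k. card {i. i < m \<and> S i = j})"
    by (rule card_UN_disjoint) auto
  finally have "real m = real (\<Sum>j<k. card {i. i < m \<and> S i = j})" by simp
  also have "\<dots> = (\<Sum>j<k. real (card {i. i < m \<and> S i = j}))" by (rule of_nat_sum)
  also have "\<dots> < (\<Sum>j<k. real m / real k)"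
    using lt assms(2) by (intro sum_strict_mono) auto
  also have "\<dots> = real m" using assms(2) by simp
  finally show False by simp
qed


lemma filter_rep0: "filter_mset (\<lambda>l. l \<noteq> 0) (replicate_mset n (0::real)) = {#}"
  by (induction n) auto

lemma hnorm_bound:
  assumes "hnorm n d c e x \<le> B" "l \<in># eigs n d c e x"
  shows "\<bar>l\<bar> \<le> B"
proof -
  have ne: "eigs n d c e x \<noteq> {#}" using assms(2) by auto
  have "Max (abs ` set_mset (eigs n d c e x)) \<le> B" using assms(1) ne unfolding hnorm_def by (simp del: Max_le_iff)
  moreover have "\<bar>l\<bar> \<le> Max (abs ` set_mset (eigs n d c e x))"
    using assms(2) by (intro Max_ge) auto
  ultimately show ?thesis by simp
qed

lemma part_contra:
  fixes \<beta> \<delta> \<eta> :: real and M d k n0 L :: nat and P :: "nat set"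
  assumes b: "0 < \<beta>" "\<beta> < 1" and dM: "d \<le> M" and M1: "1 \<le> M"
    and PM: "P \<subseteq> {..<M}" and sk: "real (card P) \<ge> real M / real k"
    and ep: "EP M d (\<lambda>l. if l \<in> P then 1 else 0) Lm" and le: "\<forall>l\<in>#Lm. l \<le> \<beta>"
    and n0: "1 \<le> n0" "n0 + L + 1 \<le> d"
    and \<delta>: "\<delta> > 0" "real L * \<delta> > (real M * \<beta> - real (card P) - real n0 * (2 * \<beta> - 1)) / real (n0 + 1)"
    and Fw: "\<And>n. n0 + 1 \<le> n \<Longrightarrow> n \<le> n0 + L \<Longrightarrow>
       sqrt (4 * \<beta> * (1 - \<beta>) * (real n / real M) * (1 - real n / real M))
            - (\<beta> - 1 / real k - (real n / real M) * (2 * \<beta> - 1)) > 2 * \<delta>"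
  shows False
proof -
  define s where "s = card P"
  have sM: "s \<le> M" unfolding s_def using PM card_mono[of "{..<M}" P] by simp
  define c where "c = (\<lambda>j. coeff ([:1, \<beta> - 1:] ^ s * [:1, \<beta>:] ^ (M - s)) j)"
  have ces: "c n = es (\<lambda>i. \<beta> - (if i \<in> P then 1 else 0)) M n" for n
  proof -
    have "es (\<lambda>i. \<beta> - (if i \<in> P then 1 else 0)) M n = es (\<lambda>i. if i \<in> P then \<beta> - 1 else \<beta>) M n"
      by (rule es_cong) simp
    also have "\<dots> = c n" unfolding c_def s_def by (rule es_two[OF PM])
    finally show ?thesis by simp
  qed
  show False
  proof (rule osc_contra[of c d "\<lambda>n. real M * \<beta> - real s - real n * (2 * \<beta> - 1)"
        "\<lambda>n. \<beta> * (1 - \<beta>) * (real M - real n + 1)" n0 L \<delta>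
        "\<lambda>n. real M * sqrt (4 * \<beta> * (1 - \<beta>) * (real n / real M) * (1 - real n / real M))"])
    show "c 0 > 0" unfolding c_def by (simp add: c_zero)
  next
    fix n assume "1 \<le> n" "n + 1 \<le> d"
    then show "real (n + 1) * c (n + 1) = (real M * \<beta> - real s - real n * (2 * \<beta> - 1)) * c n
               - \<beta> * (1 - \<beta>) * (real M - real n + 1) * c (n - 1)"
      unfolding c_def using recur[OF sM, of n \<beta>] by simp
  next
    fix n assume "1 \<le> n" "n + 1 \<le> d"
    then have "real M - real n + 1 > 0" using dM by simp
    then show "\<beta> * (1 - \<beta>) * (real M - real n + 1) > 0" using b by simp
  next
    fix n assume "n \<le> d"
    then show "c n \<ge> 0" unfolding ces using EP_nonneg[OF dM ep le] by simp
  next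
    show "1 \<le> n0" "n0 + L + 1 \<le> d" by (rule n0(1), rule n0(2))
  next
    show "\<delta> > 0" by (rule \<delta>(1))
    show "real L * \<delta> > (real M * \<beta> - real s - real n0 * (2 * \<beta> - 1)) / real (n0 + 1)"
      using \<delta>(2) unfolding s_def .
  next
    fix n assume h: "n0 + 1 \<le> n" "n \<le> n0 + L"
    have nM: "n \<le> M" using h n0 dM by simp
    show "(real M * \<beta> - real s - real n * (2 * \<beta> - 1)) + real (n + 1) * \<delta>
             \<le> real M * sqrt (4 * \<beta> * (1 - \<beta>) * (real n / real M) * (1 - real n / real M)) \<and>
          0 \<le> real M * sqrt (4 * \<beta> * (1 - \<beta>) * (real n / real M) * (1 - real n / real M)) \<and>
          (real M * sqrt (4 * \<beta> * (1 - \<beta>) * (real n / real M) * (1 - real n / real M)))^2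
             \<le> 4 * real (n + 1) * (\<beta> * (1 - \<beta>) * (real M - real n + 1))"
      using window_ok[OF b _ nM M1 Fw[OF h] \<delta>(1), of s] sk unfolding s_def by simp
  qed
qed

theorem proposition7p1:
  fixes k :: nat and \<epsilon> :: real
  assumes "k \<ge> 2" and "0 < \<epsilon>" and "\<epsilon> \<le> 1 - 1 / real k"
  shows "\<not> (\<exists>B::real.
     B < 1 / real k + \<epsilon> * (real k - 2) / real k
          + 2 * sqrt (real k - 1) / real k * sqrt (\<epsilon> - \<epsilon>^2) \<and>
     (\<forall>(n::nat) (d::nat) (c::(nat \<Rightarrow> nat) \<Rightarrow> real) (e::nat \<Rightarrow> real) (m::nat) (u::nat \<Rightarrow> nat \<Rightarrow> real).
        hyperbolic n d c e \<and>
        (\<forall>i<m. u i \<in> vecs n \<and> in_Lambda_plus n d c e (u i) \<and>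
               hrk n d c e (u i) \<le> 1 \<and> htr n d c e (u i) \<le> \<epsilon>) \<and>
        (\<lambda>j. \<Sum>i<m. u i j) = e
        \<longrightarrow> (\<exists>S::nat \<Rightarrow> nat. (\<forall>i<m. S i < k) \<and>
               (\<forall>j<k. hnorm n d c e (\<lambda>l. \<Sum>i\<in>{i. i < m \<and> S i = j}. u i l) \<le> B))))"
proof
  assume "\<exists>B::real.
     B < 1 / real k + \<epsilon> * (real k - 2) / real k
          + 2 * sqrt (real k - 1) / real k * sqrt (\<epsilon> - \<epsilon>^2) \<and>
     (\<forall>(n::nat) (d::nat) (c::(nat \<Rightarrow> nat) \<Rightarrow> real) (e::nat \<Rightarrow> real) (m::nat) (u::nat \<Rightarrow> nat \<Rightarrow> real).
        hyperbolic n d c e \<and>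
        (\<forall>i<m. u i \<in> vecs n \<and> in_Lambda_plus n d c e (u i) \<and>
               hrk n d c e (u i) \<le> 1 \<and> htr n d c e (u i) \<le> \<epsilon>) \<and>
        (\<lambda>j. \<Sum>i<m. u i j) = e
        \<longrightarrow> (\<exists>S::nat \<Rightarrow> nat. (\<forall>i<m. S i < k) \<and>
               (\<forall>j<k. hnorm n d c e (\<lambda>l. \<Sum>i\<in>{i. i < m \<and> S i = j}. u i l) \<le> B)))"
  then obtain B where BB: "B < 1 / real k + \<epsilon> * (real k - 2) / real k
          + 2 * sqrt (real k - 1) / real k * sqrt (\<epsilon> - \<epsilon>^2) \<and>
     (\<forall>(n::nat) (d::nat) (c::(nat \<Rightarrow> nat) \<Rightarrow> real) (e::nat \<Rightarrow> real) (m::nat) (u::nat \<Rightarrow> nat \<Rightarrow> real).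
        hyperbolic n d c e \<and>
        (\<forall>i<m. u i \<in> vecs n \<and> in_Lambda_plus n d c e (u i) \<and>
               hrk n d c e (u i) \<le> 1 \<and> htr n d c e (u i) \<le> \<epsilon>) \<and>
        (\<lambda>j. \<Sum>i<m. u i j) = e
        \<longrightarrow> (\<exists>S::nat \<Rightarrow> nat. (\<forall>i<m. S i < k) \<and>
               (\<forall>j<k. hnorm n d c e (\<lambda>l. \<Sum>i\<in>{i. i < m \<and> S i = j}. u i l) \<le> B)))"
    by (rule exE)
  note hB = conjunct1[OF BB]
  note H0 = conjunct2[OF BB]
  have kpos: "real k > 0" using assms(1) by simp
  have el1: "\<epsilon> < 1"
  proof -
    have "1 / real k > 0" using kpos by simp
    then show ?thesis using assms(3) by linarith
  qed
  obtain \<beta> where b: "B < \<beta>" "0 < \<beta>" "\<beta> < 1"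
    and key: "\<beta> - 1 / real k - \<epsilon> * (2 * \<beta> - 1) < sqrt (4 * \<beta> * (1 - \<beta>) * \<epsilon> * (1 - \<epsilon>))"
    using beta_choice[OF assms hB] by blast
  define \<gamma> where "\<gamma> = sqrt (4 * \<beta> * (1 - \<beta>) * \<epsilon> * (1 - \<epsilon>)) - (\<beta> - 1 / real k - \<epsilon> * (2 * \<beta> - 1))"
  have g0: "\<gamma> > 0" unfolding \<gamma>_def using key by simp
  obtain \<eta> where eta: "\<eta> > 0" and Feta: "\<And>\<nu>. \<bar>\<nu> - \<epsilon>\<bar> < \<eta> \<Longrightarrow>
      sqrt (4 * \<beta> * (1 - \<beta>) * \<nu> * (1 - \<nu>)) - (\<beta> - 1 / real k - \<nu> * (2 * \<beta> - 1)) > \<gamma> / 2"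
    using cont_eta[of \<beta> \<epsilon> "1 / real k"] g0 unfolding \<gamma>_def by blast
  define \<delta> where "\<delta> = \<gamma> / 4"
  have d0: "\<delta> > 0" unfolding \<delta>_def using g0 by simp
  define L where "L = nat \<lceil>(2 + 2 / \<epsilon>) / \<delta>\<rceil>"
  have L: "real L * \<delta> \<ge> 2 + 2 / \<epsilon>"
  proof -
    have "real L \<ge> (2 + 2 / \<epsilon>) / \<delta>" unfolding L_def by linarith
    then show ?thesis using d0 by (simp add: field_simps)
  qed
  define M where "M = nat \<lceil>(real L + 3) / \<eta> + (2 * real L + 6) / \<epsilon>\<rceil> + 1"
  have Mbig: "real M > (real L + 3) / \<eta> + (2 * real L + 6) / \<epsilon>" unfolding M_def by linarith
  have Meta: "real M * \<eta> > real L + 3"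
  proof -
    have "(2 * real L + 6) / \<epsilon> \<ge> 0" using assms(2) by simp
    then have "real M > (real L + 3) / \<eta>" using Mbig by linarith
    then show ?thesis using eta by (simp add: field_simps)
  qed
  have Meps: "\<epsilon> * real M > 2 * real L + 6"
  proof -
    have "(real L + 3) / \<eta> \<ge> 0" using eta by simp
    then have "real M > (2 * real L + 6) / \<epsilon>" using Mbig by linarith
    then show ?thesis using assms(2) by (simp add: field_simps)
  qed
  have M1: "1 \<le> M" unfolding M_def by simp
  have Mpos: "real M > 0" using M1 by simp
  define d where "d = nat \<lfloor>\<epsilon> * real M\<rfloor>"
  have dle: "real d \<le> \<epsilon> * real M" unfolding d_def using Meps by linarith
  have dgt: "real d > \<epsilon> * real M - 1" unfolding d_def using Meps by linarith
  have dM: "d \<le> M"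
  proof -
    have "\<epsilon> * real M < real M" using el1 Mpos by simp
    then show ?thesis using dle by linarith
  qed
  have d1: "1 \<le> d" using dgt Meps by linarith
  define n0 where "n0 = d - L - 1"
  have dL: "real d > real L + 2" using dgt Meps by linarith
  have n01: "1 \<le> n0" and n0d: "n0 + L + 1 = d" unfolding n0_def using dL by auto
  define u where "u = (\<lambda>(i::nat) (l::nat). if l = i then 1 else (0::real))"
  have eig_u: "eigs M d (ced M d) (ev M) (u i) = add_mset (real d / real M) (replicate_mset (d - 1) 0)"
    if "i < M" for i
    unfolding u_def by (rule eigs_eq[OF dM EP_coord[OF that d1 dM]])
  have prem2: "\<forall>i<M. u i \<in> vecs M \<and> in_Lambda_plus M d (ced M d) (ev M) (u i) \<and>
               hrk M d (ced M d) (ev M) (u i) \<le> 1 \<and> htr M d (ced M d) (ev M) (u i) \<le> \<epsilon>"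
  proof (intro allI impI conjI)
    fix i assume i: "i < M"
    show "u i \<in> vecs M" unfolding vecs_def u_def using i by auto
    show "in_Lambda_plus M d (ced M d) (ev M) (u i)"
      unfolding in_Lambda_plus_def eig_u[OF i] by auto
    show "hrk M d (ced M d) (ev M) (u i) \<le> 1"
      unfolding hrk_def eig_u[OF i] by (simp add: filter_rep0)
    have "real d / real M \<le> \<epsilon>" using dle Mpos by (simp add: divide_le_eq mult.commute)
    then show "htr M d (ced M d) (ev M) (u i) \<le> \<epsilon>"
      unfolding htr_def eig_u[OF i] by simp
  qed
  have prem3: "(\<lambda>j. \<Sum>i<M. u i j) = ev M"
    unfolding u_def ev_def by (rule ext) (simp add: sum.delta')
  obtain S where S1: "\<forall>i<M. S i < k"
    and S2: "\<forall>j<k. hnorm M d (ced M d) (ev M) (\<lambda>l. \<Sum>i\<in>{i. i < M \<and> S i = j}. u i l) \<le> B"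
    using H0[rule_format, of M d "ced M d" "ev M" M u] hyperbolic_ced[OF dM] prem2 prem3 by blast
  obtain j where j: "j < k" and jc: "real (card {i. i < M \<and> S i = j}) \<ge> real M / real k"
    using pigeon[OF S1] assms(1) by auto
  define P where "P = {i. i < M \<and> S i = j}"
  have PM: "P \<subseteq> {..<M}" unfolding P_def by auto
  have fP: "finite P" using PM finite_subset by blast
  have xP: "(\<lambda>l. \<Sum>i\<in>{i. i < M \<and> S i = j}. u i l) = (\<lambda>l. if l \<in> P then 1 else 0)"
    unfolding P_def[symmetric] u_def using fP by (simp add: sum.delta')
  have "hnorm M d (ced M d) (ev M) (\<lambda>l. \<Sum>i\<in>{i. i < M \<and> S i = j}. u i l) \<le> B" using S2 j by blast
  then have hn: "hnorm M d (ced M d) (ev M) (\<lambda>l. if l \<in> P then 1 else 0) \<le> B" unfolding xP .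
  define Lm where "Lm = eigs M d (ced M d) (ev M) (\<lambda>l. if l \<in> P then 1 else 0)"
  have ep: "EP M d (\<lambda>l. if l \<in> P then 1 else 0) Lm" unfolding Lm_def by (rule eigs_EP[OF dM])
  have le: "\<forall>l\<in>#Lm. l \<le> \<beta>"
  proof
    fix l assume "l \<in># Lm"
    then have "\<bar>l\<bar> \<le> B" using hnorm_bound[OF hn] unfolding Lm_def by blast
    then show "l \<le> \<beta>" using b by linarith
  qed
  show False
  proof (rule part_contra[OF b(2,3) dM M1 PM _ ep le n01 _ d0])
    show "real M / real k \<le> real (card P)" using jc unfolding P_def .
    show "n0 + L + 1 \<le> d" using n0d by simp
  next
    have n0h: "real (n0 + 1) \<ge> \<epsilon> * real M / 2"
    proof -
      have "real (n0 + 1) = real d - real L" using n0d by simp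
      then show ?thesis using dgt Meps by linarith
    qed
    have n0p: "real (n0 + 1) > 0" by simp
    have A: "real M * \<beta> - real (card P) - real n0 * (2 * \<beta> - 1) \<le> real M + real n0"
    proof -
      have "real M * \<beta> \<le> real M" using b Mpos by simp
      moreover have "- (real n0 * (2 * \<beta> - 1)) \<le> real n0" using b by (simp add: algebra_simps)
      ultimately show ?thesis by simp
    qed
    have "(real M + real n0) / real (n0 + 1) < 2 + 2 / \<epsilon>"
    proof -
      have "real M \<le> (2 / \<epsilon>) * real (n0 + 1)" using n0h assms(2) by (simp add: field_simps)
      then have "real M + real n0 < (2 + 2 / \<epsilon>) * real (n0 + 1)" by (simp add: algebra_simps)
      then show ?thesis using n0p by (simp add: divide_less_eq)
    qed
    moreover have "(real M * \<beta> - real (card P) - real n0 * (2 * \<beta> - 1)) / real (n0 + 1) \<le> (real M + real n0) / real (n0 + 1)"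
      using A n0p by (simp add: divide_right_mono)
    ultimately show "real L * \<delta> > (real M * \<beta> - real (card P) - real n0 * (2 * \<beta> - 1)) / real (n0 + 1)"
      using L by linarith
  next
    fix n assume h: "n0 + 1 \<le> n" "n \<le> n0 + L"
    have "\<bar>real n / real M - \<epsilon>\<bar> < \<eta>"
    proof -
      have "real n \<le> real d - 1" using h n0d by simp
      then have "real n < \<epsilon> * real M" using dle by linarith
      then have up: "real n / real M < \<epsilon>" using Mpos by (simp add: divide_less_eq)
      have "real n \<ge> real d - real L" using h n0d by simp
      then have "real n > \<epsilon> * real M - (real L + 1)" using dgt by linarith
      moreover have "real L + 1 < \<eta> * real M" using Meta by (simp add: mult.commute)
      ultimately have "real n > (\<epsilon> - \<eta>) * real M" by (simp add: algebra_simps)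
      then have "real n / real M > \<epsilon> - \<eta>" using Mpos by (simp add: less_divide_eq)
      then show ?thesis using up by linarith
    qed
    then have "sqrt (4 * \<beta> * (1 - \<beta>) * (real n / real M) * (1 - real n / real M))
            - (\<beta> - 1 / real k - (real n / real M) * (2 * \<beta> - 1)) > \<gamma> / 2" by (rule Feta)
    then show "sqrt (4 * \<beta> * (1 - \<beta>) * (real n / real M) * (1 - real n / real M))
            - (\<beta> - 1 / real k - (real n / real M) * (2 * \<beta> - 1)) > 2 * \<delta>" unfolding \<delta>_def by simp
  qed
qed

end
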